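(* Let $M$ be a metrisable manifold and let $h_t:M\times\mathbb{L}_+\to M\times\mathbb{L}_+$, $t\in[0,1]$, be an isotopy of homeomorphisms. Then there exist $\alpha<\omega_1$ and an isotopy $g_t:M\to M$, $t\in[0,1]$, such that $$h_t\big(\{x\}\times[\alpha,\omega_1)\big)=\{g_t(x)\}\times[\alpha,\omega_1)$$ for every $x\in M$ and every $t\in[0,1]$.
   Context: $\mathbb{L}_+$ denotes the open long ray (the long ray with its initial point removed), whose points beyond a countable ordinal $\alpha$ are written $[\alpha,\omega_1)$. A manifold is a connected Hausdorff space each point of which has a neighbourhood homeomorphic to $\mathbb{R}^n$. An isotopy of homeomorphisms of $X$ is a continuous map $H:X\times[0,1]\to X$ such that each $h_t=H(\cdot,t)$ is a homeomorphism of $X$. *)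

theory Defs
  imports "HOL-Analysis.Analysis"
begin

definition manifold :: "'a topology \<Rightarrow> bool" where
  "manifold M \<longleftrightarrow> connected_space M \<and> Hausdorff_space M \<and>
     (\<exists>n. \<forall>x\<in>topspace M. \<exists>U. openin M U \<and> x \<in> U \<and>
          subtopology M U homeomorphic_space Euclidean_space n)"

definition isotopy :: "'a topology \<Rightarrow> ('a \<times> real \<Rightarrow> 'a) \<Rightarrow> bool" where
  "isotopy X H \<longleftrightarrow> continuous_map (prod_topology X (top_of_set {0..1})) X H \<and>
     (\<forall>t\<in>{0..1}. homeomorphic_map X X (\<lambda>x. H (x, t)))"

text \<open>The long ray is modelled as omega_1 times [0,1) with the lexicographic order,
where omega_1 is represented by a well-ordered type 'w (see the theorem's assumptions).\<close>
definition lex_less :: "'w::linorder \<times> real \<Rightarrow> 'w \<times> real \<Rightarrow> bool" where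
  "lex_less p q \<longleftrightarrow> fst p < fst q \<or> (fst p = fst q \<and> snd p < snd q)"

definition long_ray_open :: "('w::wellorder \<times> real) set" where
  "long_ray_open = {p. 0 \<le> snd p \<and> snd p < 1} - {(LEAST w. True, 0)}"

definition long_ray_top :: "('w::wellorder \<times> real) topology" where
  "long_ray_top = topology_generated_by
     ({{y \<in> long_ray_open. lex_less y p} | p. p \<in> long_ray_open} \<union>
      {{y \<in> long_ray_open. lex_less p y} | p. p \<in> long_ray_open})"

definition long_ray_tail :: "'w::wellorder \<Rightarrow> ('w \<times> real) set" where
  "long_ray_tail \<alpha> = {y \<in> long_ray_open. \<not> lex_less y (\<alpha>, 0)}"

end

theory Submission
  imports Defs
begin

lemma w_bound:
  assumes unc: "\<not> countable (UNIV :: 'w::wellorder set)"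
    and seg: "\<forall>w::'w. countable {..<w}"
    and S: "countable (S::'w set)"
  shows "\<exists>u. \<forall>s\<in>S. s < u"
proof -
  have "countable (\<Union>s\<in>S. {..s})"
  proof (rule countable_UN[OF S])
    fix s assume "s \<in> S"
    have "{..s} = insert s {..<s}" by auto
    then show "countable {..s}" using seg by simp
  qed
  then have "(\<Union>s\<in>S. {..s}) \<noteq> UNIV" using unc by metis
  then obtain u where "u \<notin> (\<Union>s\<in>S. {..s})" by blast
  then show ?thesis by (auto simp: not_le)
qed

lemma w_sup:
  fixes S :: "'w::wellorder set"
  assumes "\<forall>s\<in>S. s < u"
  shows "\<exists>\<sigma>. (\<forall>s\<in>S. s \<le> \<sigma>) \<and> (\<forall>v<\<sigma>. \<exists>s\<in>S. v < s)"
proof -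
  define \<sigma> where "\<sigma> = (LEAST v. \<forall>s\<in>S. s \<le> v)"
  have "\<forall>s\<in>S. s \<le> u" using assms by auto
  then have 1: "\<forall>s\<in>S. s \<le> \<sigma>" unfolding \<sigma>_def by (rule LeastI)
  have "\<exists>s\<in>S. v < s" if "v < \<sigma>" for v
  proof (rule ccontr)
    assume "\<not> ?thesis"
    then have "\<forall>s\<in>S. s \<le> v" by (auto simp: not_less)
    then have "\<sigma> \<le> v" unfolding \<sigma>_def by (rule Least_le)
    with that show False by simp
  qed
  with 1 show ?thesis by blast
qed

lemma w_club:
  fixes F :: "'w::wellorder \<Rightarrow> 'w"
  assumes unc: "\<not> countable (UNIV :: 'w set)"
    and seg: "\<forall>w::'w. countable {..<w}"
  shows "\<exists>\<alpha>. \<xi>0 < \<alpha> \<and> (\<forall>\<xi><\<alpha>. F \<xi> < \<alpha>)"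
proof -
  define F' where "F' \<xi> = (SOME u. \<forall>s \<in> insert \<xi> (F ` {..\<xi>}). s < u)" for \<xi>
  have F': "\<xi> < F' \<xi> \<and> (\<forall>\<xi>'\<le>\<xi>. F \<xi>' < F' \<xi>)" for \<xi>
  proof -
    have "{..\<xi>} = insert \<xi> {..<\<xi>}" by auto
    then have "countable {..\<xi>}" using seg by simp
    then have "\<exists>u. \<forall>s \<in> insert \<xi> (F ` {..\<xi>}). s < u"
      by (intro w_bound[OF unc seg]) auto
    then have "\<forall>s \<in> insert \<xi> (F ` {..\<xi>}). s < F' \<xi>"
      unfolding F'_def by (rule someI_ex)
    then show ?thesis by auto
  qed
  define \<gamma> where "\<gamma> n = (F' ^^ n) \<xi>0" for n
  have \<gamma>S: "\<gamma> (Suc n) = F' (\<gamma> n)" for n by (simp add: \<gamma>_def)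
  obtain u where "\<forall>s\<in>range \<gamma>. s < u" using w_bound[OF unc seg, of "range \<gamma>"] by auto
  then obtain \<sigma> where s1: "\<forall>s\<in>range \<gamma>. s \<le> \<sigma>" and s2: "\<forall>v<\<sigma>. \<exists>s\<in>range \<gamma>. v < s"
    using w_sup by blast
  have "\<xi>0 < \<sigma>"
  proof -
    have "\<xi>0 < \<gamma> 1" using F'[of \<xi>0] by (simp add: \<gamma>_def)
    also have "\<gamma> 1 \<le> \<sigma>" using s1 by auto
    finally show ?thesis .
  qed
  moreover have "F \<xi> < \<sigma>" if xs: "\<xi> < \<sigma>" for \<xi>
  proof -
    obtain n where "\<xi> < \<gamma> n" using s2[rule_format, OF xs] by auto
    then have "F \<xi> < \<gamma> (Suc n)" using F'[of "\<gamma> n"] by (simp add: \<gamma>S)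
    also have "\<gamma> (Suc n) \<le> \<sigma>" using s1 by auto
    finally show ?thesis .
  qed
  ultimately show ?thesis by blast
qed

lemma lex_trans: "lex_less a b \<Longrightarrow> lex_less b c \<Longrightarrow> lex_less a c"
  unfolding lex_less_def by auto
lemma lex_irrefl: "\<not> lex_less a a"
  unfolding lex_less_def by auto
lemma lex_total: "lex_less a b \<or> a = b \<or> lex_less b a"
  unfolding lex_less_def by (cases a; cases b) auto
lemma lex_asym: "lex_less a b \<Longrightarrow> \<not> lex_less b a"
  unfolding lex_less_def by auto
lemma lex_not_less: "\<not> lex_less a b \<Longrightarrow> a = b \<or> lex_less b a"
  using lex_total by blast

lemma LRO_iff: "y \<in> long_ray_open \<longleftrightarrow> 0 \<le> snd y \<and> snd y < 1 \<and> y \<noteq> (LEAST w. True, 0)"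
  by (auto simp: long_ray_open_def)

lemma LRO_above: "y \<in> (long_ray_open::('w::wellorder\<times>real) set) \<Longrightarrow>
   (fst y, (snd y + 1)/2) \<in> long_ray_open \<and> lex_less y (fst y, (snd y + 1)/2)"
  by (auto simp: LRO_iff lex_less_def)

lemma L_topspace: "topspace (long_ray_top::('w::wellorder\<times>real) topology) = long_ray_open"
proof -
  have "y \<in> \<Union>({{y \<in> long_ray_open. lex_less y p} | p. p \<in> long_ray_open} \<union>
      {{y \<in> long_ray_open. lex_less p y} | p. p \<in> long_ray_open})"
    if "y \<in> (long_ray_open::('w\<times>real) set)" for y
    using LRO_above[OF that] that by blast
  then show ?thesis unfolding long_ray_top_def topology_generated_by_topspace by blast
qed

lemma L_open_below: "p \<in> long_ray_open \<Longrightarrow>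
   openin (long_ray_top::('w::wellorder\<times>real) topology) {y \<in> long_ray_open. lex_less y p}"
  unfolding long_ray_top_def by (rule topology_generated_by_Basis) blast

lemma L_open_above: "p \<in> long_ray_open \<Longrightarrow>
   openin (long_ray_top::('w::wellorder\<times>real) topology) {y \<in> long_ray_open. lex_less p y}"
  unfolding long_ray_top_def by (rule topology_generated_by_Basis) blast

lemma L_closed_le: "p \<in> long_ray_open \<Longrightarrow>
   closedin (long_ray_top::('w::wellorder\<times>real) topology) {y \<in> long_ray_open. \<not> lex_less p y}"
proof -
  assume p: "p \<in> long_ray_open"
  have "long_ray_open - {y \<in> long_ray_open. \<not> lex_less p y} = {y \<in> long_ray_open. lex_less p y}" by auto
  then show ?thesis unfolding closedin_def L_topspace using L_open_above[OF p] by auto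
qed

lemma L_closed_ge: "p \<in> long_ray_open \<Longrightarrow>
   closedin (long_ray_top::('w::wellorder\<times>real) topology) {y \<in> long_ray_open. \<not> lex_less y p}"
proof -
  assume p: "p \<in> long_ray_open"
  have "long_ray_open - {y \<in> long_ray_open. \<not> lex_less y p} = {y \<in> long_ray_open. lex_less y p}" by auto
  then show ?thesis unfolding closedin_def L_topspace using L_open_below[OF p] by auto
qed

lemma L_left_gen:
  assumes "generate_topology_on ({{y \<in> long_ray_open. lex_less y p} | p. p \<in> long_ray_open} \<union>
      {{y \<in> long_ray_open. lex_less p y} | p. p \<in> long_ray_open}) U"
  shows "\<forall>z\<in>U \<inter> (long_ray_open::('w::wellorder\<times>real) set). \<exists>a. 0 \<le> snd a \<and> lex_less a z \<and>
      (\<forall>y\<in>long_ray_open. lex_less a y \<and> \<not> lex_less z y \<longrightarrow> y \<in> U)"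
  using assms
proof induction
  case Empty
  then show ?case by simp
next
  case (Int a b)
  show ?case
  proof
    fix z assume z: "z \<in> a \<inter> b \<inter> long_ray_open"
    obtain a1 where a1: "0 \<le> snd a1 \<and> lex_less a1 z \<and>
      (\<forall>y\<in>long_ray_open. lex_less a1 y \<and> \<not> lex_less z y \<longrightarrow> y \<in> a)" using Int.IH(1) z by blast
    obtain a2 where a2: "0 \<le> snd a2 \<and> lex_less a2 z \<and>
      (\<forall>y\<in>long_ray_open. lex_less a2 y \<and> \<not> lex_less z y \<longrightarrow> y \<in> b)" using Int.IH(2) z by blast
    show "\<exists>a'. 0 \<le> snd a' \<and> lex_less a' z \<and>
      (\<forall>y\<in>long_ray_open. lex_less a' y \<and> \<not> lex_less z y \<longrightarrow> y \<in> a \<inter> b)"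
    proof (cases "lex_less a1 a2")
      case True
      then show ?thesis using a1 a2 by (intro exI[of _ a2]) (meson IntI lex_trans)
    next
      case False
      then have "a1 = a2 \<or> lex_less a2 a1" using lex_not_less by blast
      then show ?thesis using a1 a2 by (intro exI[of _ a1]) (meson IntI lex_trans)
    qed
  qed
next
  case (UN K)
  then show ?case by blast
next
  case (Basis s)
  then consider p where "p \<in> long_ray_open" "s = {y \<in> long_ray_open. lex_less y p}"
    | p where "p \<in> long_ray_open" "s = {y \<in> long_ray_open. lex_less p y}" by blast
  then show ?case
  proof cases
    case 1
    show ?thesis
    proof
      fix z assume z: "z \<in> s \<inter> long_ray_open"
      define a where "a = (if 0 < snd z then (fst z, 0) else ((LEAST w. True)::'w, 0::real))"
      have "lex_less a z"
      proof (cases "0 < snd z")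
        case True then show ?thesis by (simp add: a_def lex_less_def)
      next
        case False
        then have "snd z = 0" "fst z \<noteq> (LEAST w. True)" using z
          by (auto simp: LRO_iff) (metis prod.collapse)
        moreover have "(LEAST w::'w. True) \<le> fst z" by (rule Least_le) simp
        ultimately show ?thesis using False by (simp add: a_def lex_less_def)
      qed
      moreover have "0 \<le> snd a" by (simp add: a_def)
      moreover have "\<forall>y\<in>long_ray_open. lex_less a y \<and> \<not> lex_less z y \<longrightarrow> y \<in> s"
        using 1 z by (auto dest: lex_not_less intro: lex_trans)
      ultimately show "\<exists>a. 0 \<le> snd a \<and> lex_less a z \<and>
        (\<forall>y\<in>long_ray_open. lex_less a y \<and> \<not> lex_less z y \<longrightarrow> y \<in> s)" by blast
    qed
  next
    case 2
    show ?thesis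
    proof
      fix z assume z: "z \<in> s \<inter> long_ray_open"
      show "\<exists>a. 0 \<le> snd a \<and> lex_less a z \<and>
        (\<forall>y\<in>long_ray_open. lex_less a y \<and> \<not> lex_less z y \<longrightarrow> y \<in> s)"
        using 2 z by (intro exI[of _ p]) (auto simp: LRO_iff)
    qed
  qed
qed

lemma L_left:
  assumes "openin (long_ray_top::('w::wellorder\<times>real) topology) U" "z \<in> U"
  shows "\<exists>a. 0 \<le> snd a \<and> lex_less a z \<and>
      (\<forall>y\<in>long_ray_open. lex_less a y \<and> \<not> lex_less z y \<longrightarrow> y \<in> U)"
proof -
  have "z \<in> long_ray_open" using assms openin_subset L_topspace by blast
  then show ?thesis using L_left_gen[OF assms(1)[unfolded long_ray_top_def openin_topology_generated_by_iff]] assms(2)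
    by blast
qed

lemma L_right_gen:
  assumes "generate_topology_on ({{y \<in> long_ray_open. lex_less y p} | p. p \<in> long_ray_open} \<union>
      {{y \<in> long_ray_open. lex_less p y} | p. p \<in> long_ray_open}) U"
  shows "\<forall>z\<in>U \<inter> (long_ray_open::('w::wellorder\<times>real) set). \<exists>b. lex_less z b \<and>
      (\<forall>y\<in>long_ray_open. \<not> lex_less y z \<and> lex_less y b \<longrightarrow> y \<in> U)"
  using assms
proof induction
  case Empty
  then show ?case by simp
next
  case (Int a b)
  show ?case
  proof
    fix z assume z: "z \<in> a \<inter> b \<inter> long_ray_open"
    obtain a1 where a1: "lex_less z a1 \<and>
      (\<forall>y\<in>long_ray_open. \<not> lex_less y z \<and> lex_less y a1 \<longrightarrow> y \<in> a)" using Int.IH(1) z by blast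
    obtain a2 where a2: "lex_less z a2 \<and>
      (\<forall>y\<in>long_ray_open. \<not> lex_less y z \<and> lex_less y a2 \<longrightarrow> y \<in> b)" using Int.IH(2) z by blast
    show "\<exists>b'. lex_less z b' \<and>
      (\<forall>y\<in>long_ray_open. \<not> lex_less y z \<and> lex_less y b' \<longrightarrow> y \<in> a \<inter> b)"
    proof (cases "lex_less a1 a2")
      case True
      then show ?thesis using a1 a2 by (intro exI[of _ a1]) (meson IntI lex_trans)
    next
      case False
      then have "a1 = a2 \<or> lex_less a2 a1" using lex_not_less by blast
      then show ?thesis using a1 a2 by (intro exI[of _ a2]) (meson IntI lex_trans)
    qed
  qed
next
  case (UN K)
  then show ?case by blast
next
  case (Basis s)
  then consider p where "p \<in> long_ray_open" "s = {y \<in> long_ray_open. lex_less y p}"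
    | p where "p \<in> long_ray_open" "s = {y \<in> long_ray_open. lex_less p y}" by blast
  then show ?case
  proof cases
    case 1
    show ?thesis
    proof
      fix z assume z: "z \<in> s \<inter> long_ray_open"
      show "\<exists>b. lex_less z b \<and>
        (\<forall>y\<in>long_ray_open. \<not> lex_less y z \<and> lex_less y b \<longrightarrow> y \<in> s)"
        using 1 z by (intro exI[of _ p]) auto
    qed
  next
    case 2
    show ?thesis
    proof
      fix z assume z: "z \<in> s \<inter> long_ray_open"
      show "\<exists>b. lex_less z b \<and>
        (\<forall>y\<in>long_ray_open. \<not> lex_less y z \<and> lex_less y b \<longrightarrow> y \<in> s)"
        using 2 z by (intro exI[of _ "(fst z, snd z + 1)"])
          (auto simp: lex_less_def dest: lex_not_less)
    qed
  qed
qed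

lemma L_right:
  assumes "openin (long_ray_top::('w::wellorder\<times>real) topology) U" "z \<in> U"
  shows "\<exists>b. lex_less z b \<and>
      (\<forall>y\<in>long_ray_open. \<not> lex_less y z \<and> lex_less y b \<longrightarrow> y \<in> U)"
proof -
  have "z \<in> long_ray_open" using assms openin_subset L_topspace by blast
  then show ?thesis using L_right_gen[OF assms(1)[unfolded long_ray_top_def openin_topology_generated_by_iff]] assms(2)
    by blast
qed

lemma L_evconst_eps:
  fixes f :: "'w::wellorder \<times> real \<Rightarrow> 'b"
  assumes unc: "\<not> countable (UNIV :: 'w set)"
    and seg: "\<forall>w::'w. countable {..<w}"
    and ms: "Metric_space Ms d"
    and f: "continuous_map long_ray_top (Metric_space.mtopology Ms d) f"
    and eps: "0 < \<epsilon>"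
  shows "\<exists>\<beta>. \<beta>0 < \<beta> \<and> (\<forall>y\<in>long_ray_open. \<forall>z\<in>long_ray_open.
           \<not> lex_less y (\<beta>,0) \<and> \<not> lex_less z (\<beta>,0) \<longrightarrow> d (f y) (f z) < \<epsilon>)"
proof (rule ccontr)
  interpret Metric_space Ms d by (fact ms)
  assume "\<not> ?thesis"
  note nt = this
  have bad: "\<forall>\<beta>. \<beta>0 < \<beta> \<longrightarrow> (\<exists>yz. fst yz \<in> long_ray_open \<and> snd yz \<in> long_ray_open \<and>
      \<not> lex_less (fst yz) (\<beta>,0) \<and> \<not> lex_less (snd yz) (\<beta>,0) \<and> \<not> d (f (fst yz)) (f (snd yz)) < \<epsilon>)"
  proof (intro allI impI)
    fix \<beta> :: 'w assume "\<beta>0 < \<beta>"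
    then obtain y z where "y \<in> long_ray_open" "z \<in> long_ray_open"
      "\<not> lex_less y (\<beta>,0)" "\<not> lex_less z (\<beta>,0)" "\<not> d (f y) (f z) < \<epsilon>"
      using nt by blast
    then show "\<exists>yz. fst yz \<in> long_ray_open \<and> snd yz \<in> long_ray_open \<and>
      \<not> lex_less (fst yz) (\<beta>,0) \<and> \<not> lex_less (snd yz) (\<beta>,0) \<and> \<not> d (f (fst yz)) (f (snd yz)) < \<epsilon>"
      by (intro exI[of _ "(y,z)"]) simp
  qed
  define P where "P \<beta> = (SOME yz. fst yz \<in> long_ray_open \<and> snd yz \<in> long_ray_open \<and>
      \<not> lex_less (fst yz) (\<beta>,0) \<and> \<not> lex_less (snd yz) (\<beta>,0) \<and> \<not> d (f (fst yz)) (f (snd yz)) < \<epsilon>)" for \<beta>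
  have P: "fst (P \<beta>) \<in> long_ray_open \<and> snd (P \<beta>) \<in> long_ray_open \<and>
      \<not> lex_less (fst (P \<beta>)) (\<beta>,0) \<and> \<not> lex_less (snd (P \<beta>)) (\<beta>,0) \<and> \<not> d (f (fst (P \<beta>))) (f (snd (P \<beta>))) < \<epsilon>"
    if "\<beta>0 < \<beta>" for \<beta>
  proof -
    have "\<exists>yz. fst yz \<in> long_ray_open \<and> snd yz \<in> long_ray_open \<and>
      \<not> lex_less (fst yz) (\<beta>,0) \<and> \<not> lex_less (snd yz) (\<beta>,0) \<and> \<not> d (f (fst yz)) (f (snd yz)) < \<epsilon>"
      using bad that by blast
    then show ?thesis unfolding P_def by (rule someI_ex)
  qed
  define N where "N \<beta> = (SOME u. \<forall>s\<in>{\<beta>, fst (fst (P \<beta>)), fst (snd (P \<beta>))}. s < u)" for \<beta>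
  have N: "\<forall>s\<in>{\<beta>, fst (fst (P \<beta>)), fst (snd (P \<beta>))}. s < N \<beta>" for \<beta>
    unfolding N_def by (rule someI_ex) (rule w_bound[OF unc seg], simp)
  have "countable {\<beta>0}" by simp
  from w_bound[OF unc seg this] obtain g0 where "\<forall>s\<in>{\<beta>0}. s < g0" ..
  then have g0: "\<beta>0 < g0" by simp
  define \<gamma> where "\<gamma> n = (N ^^ n) g0" for n
  have \<gamma>S: "\<gamma> (Suc n) = N (\<gamma> n)" for n by (simp add: \<gamma>_def)
  have \<gamma>b: "\<beta>0 < \<gamma> n" for n
  proof (induction n)
    case 0 then show ?case using g0 by (simp add: \<gamma>_def)
  next
    case (Suc n) then show ?case using N[of "\<gamma> n"] by (auto simp: \<gamma>S intro: less_trans)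
  qed
  have "countable (range \<gamma>)" by simp
  from w_bound[OF unc seg this] obtain u where "\<forall>s\<in>range \<gamma>. s < u" ..
  then obtain \<sigma> where s1: "\<forall>s\<in>range \<gamma>. s \<le> \<sigma>" and s2: "\<forall>v<\<sigma>. \<exists>s\<in>range \<gamma>. v < s"
    using w_sup by blast
  define y where "y n = fst (P (\<gamma> n))" for n
  define z where "z n = snd (P (\<gamma> n))" for n
  have yz: "y n \<in> long_ray_open \<and> z n \<in> long_ray_open \<and> \<not> lex_less (y n) (\<gamma> n,0) \<and>
     \<not> lex_less (z n) (\<gamma> n,0) \<and> \<not> d (f (y n)) (f (z n)) < \<epsilon> \<and>
     lex_less (y n) (\<sigma>, 0) \<and> lex_less (z n) (\<sigma>, 0)" for n
  proof -
    have "fst (y n) < \<gamma> (Suc n)" "fst (z n) < \<gamma> (Suc n)"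
      using N[of "\<gamma> n"] by (auto simp: \<gamma>S y_def z_def)
    moreover have "\<gamma> (Suc n) \<le> \<sigma>" using s1 by auto
    ultimately have "fst (y n) < \<sigma>" "fst (z n) < \<sigma>" by (meson less_le_trans)+
    then have "lex_less (y n) (\<sigma>,0)" "lex_less (z n) (\<sigma>,0)" by (simp_all add: lex_less_def)
    moreover have "y n \<in> long_ray_open \<and> z n \<in> long_ray_open \<and> \<not> lex_less (y n) (\<gamma> n,0) \<and>
     \<not> lex_less (z n) (\<gamma> n,0) \<and> \<not> d (f (y n)) (f (z n)) < \<epsilon>"
      unfolding y_def z_def by (rule P[OF \<gamma>b[of n]])
    ultimately show ?thesis by blast
  qed
  have \<sigma>b: "\<beta>0 < \<sigma>" using \<gamma>b[of 0] s1 by (meson order_less_le_trans rangeI)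
  have sL: "(\<sigma>, 0) \<in> long_ray_open"
  proof -
    have "(LEAST w::'w. True) \<le> \<beta>0" by (rule Least_le) simp
    then show ?thesis using \<sigma>b by (auto simp: LRO_iff)
  qed
  have im: "f ` long_ray_open \<subseteq> Ms"
    using continuous_map_image_subset_topspace[OF f] by (simp add: L_topspace)
  have fs: "f (\<sigma>,0) \<in> Ms" using im sL by auto
  let ?U = "{x \<in> topspace long_ray_top. f x \<in> mball (f (\<sigma>,0)) (\<epsilon>/2)}"
  have "openin long_ray_top ?U"
    by (rule openin_continuous_map_preimage[OF f openin_mball])
  moreover have "(\<sigma>,0) \<in> ?U" using sL fs eps L_topspace by auto
  ultimately obtain a where a: "0 \<le> snd a" "lex_less a (\<sigma>,0)"
     "\<forall>y\<in>long_ray_open. lex_less a y \<and> \<not> lex_less (\<sigma>,0) y \<longrightarrow> y \<in> ?U"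
    using L_left by blast
  have "fst a < \<sigma>" using a(1,2) by (auto simp: lex_less_def)
  then obtain n where n: "fst a < \<gamma> n" using s2 by auto
  have "lex_less a (y n)" "lex_less a (z n)"
    using n yz[of n] by (auto simp: lex_less_def)
  then have "y n \<in> ?U" "z n \<in> ?U" using a(3) yz[of n] lex_asym by blast+
  then have "d (f (\<sigma>,0)) (f (y n)) < \<epsilon>/2" "d (f (\<sigma>,0)) (f (z n)) < \<epsilon>/2" by auto
  moreover have "d (f (y n)) (f (z n)) \<le> d (f (\<sigma>,0)) (f (y n)) + d (f (\<sigma>,0)) (f (z n))"
    using triangle'' fs \<open>y n \<in> ?U\<close> \<open>z n \<in> ?U\<close> by auto
  ultimately show False using yz[of n] by linarith
qed

lemma L_evconst:
  fixes f :: "'w::wellorder \<times> real \<Rightarrow> 'b"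
  assumes unc: "\<not> countable (UNIV :: 'w set)"
    and seg: "\<forall>w::'w. countable {..<w}"
    and ms: "Metric_space Ms d"
    and f: "continuous_map long_ray_top (Metric_space.mtopology Ms d) f"
  shows "\<exists>\<beta>. \<beta>0 < \<beta> \<and> (\<forall>y\<in>long_ray_open. \<forall>z\<in>long_ray_open.
           \<not> lex_less y (\<beta>,0) \<and> \<not> lex_less z (\<beta>,0) \<longrightarrow> f y = f z)"
proof -
  interpret Metric_space Ms d by (fact ms)
  have "\<forall>n::nat. \<exists>\<beta>. \<beta>0 < \<beta> \<and> (\<forall>y\<in>long_ray_open. \<forall>z\<in>long_ray_open.
           \<not> lex_less y (\<beta>,0) \<and> \<not> lex_less z (\<beta>,0) \<longrightarrow> d (f y) (f z) < inverse (real (Suc n)))"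
    by (intro allI L_evconst_eps[OF unc seg ms f]) simp
  from choice[OF this] obtain B where B0: "\<forall>n. \<beta>0 < B n \<and> (\<forall>y\<in>long_ray_open. \<forall>z\<in>long_ray_open.
           \<not> lex_less y (B n,0) \<and> \<not> lex_less z (B n,0) \<longrightarrow> d (f y) (f z) < inverse (real (Suc n)))"
    ..
  note B = B0[rule_format]
  have "countable (insert \<beta>0 (range B))" by simp
  from w_bound[OF unc seg this] obtain \<beta> where \<beta>: "\<forall>s\<in>insert \<beta>0 (range B). s < \<beta>" ..
  have "f y = f z" if y: "y \<in> long_ray_open" "\<not> lex_less y (\<beta>,0)"
     and z: "z \<in> long_ray_open" "\<not> lex_less z (\<beta>,0)" for y z
  proof (rule ccontr)
    assume ne: "f y \<noteq> f z"
    have im: "f ` long_ray_open \<subseteq> Ms"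
      using continuous_map_image_subset_topspace[OF f] by (simp add: L_topspace)
    have "f y \<in> Ms" "f z \<in> Ms" using im y z by auto
    then have "0 < d (f y) (f z)" using ne by simp
    then obtain n where n: "inverse (real (Suc n)) < d (f y) (f z)" using reals_Archimedean by blast
    have Bn: "B n < \<beta>" using \<beta> by blast
    have "\<not> fst y < \<beta>" "\<not> fst z < \<beta>" using y(2) z(2) by (simp_all add: lex_less_def)
    then have "\<beta> \<le> fst y" "\<beta> \<le> fst z" by (simp_all add: not_less)
    then have "B n < fst y" "B n < fst z" using Bn by (meson less_le_trans)+
    then have "\<not> lex_less y (B n,0)" "\<not> lex_less z (B n,0)"
      using order.asym by (auto simp: lex_less_def)
    then have "d (f y) (f z) < inverse (real (Suc n))" using conjunct2[OF B[of n]] y z by blast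
    then show False using n by linarith
  qed
  then show ?thesis using \<beta> by blast
qed

lemma sc_euclidean: "second_countable (euclidean::'a::second_countable_topology topology)"
proof -
  obtain B :: "'a set set" where B: "countable B" "topological_basis B" using ex_countable_basis by blast
  show ?thesis unfolding second_countable_def
  proof (intro exI conjI ballI allI impI)
    show "countable B" by (fact B(1))
    show "openin euclidean V" if "V \<in> B" for V using topological_basis_open[OF B(2) that] by simp
    show "\<exists>V\<in>B. x \<in> V \<and> V \<subseteq> U" if "openin euclidean U \<and> x \<in> U" for U x
      using topological_basisE[OF B(2), of U x] that by auto
  qed
qed

lemma sc_Euclidean_space: "second_countable (Euclidean_space n)"
  unfolding Euclidean_space_def euclidean_product_topology
  by (intro second_countable_subtopology sc_euclidean)

lemma manifold_separable:
  assumes man: "manifold M" and met: "metrizable_space M"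
  shows "\<exists>D. countable D \<and> D \<subseteq> topspace M \<and> M closure_of D = topspace M"
proof -
  obtain Ms d where ms: "Metric_space Ms d" and Meq: "M = Metric_space.mtopology Ms d"
    using met unfolding metrizable_space_def by blast
  interpret Metric_space Ms d by (fact ms)
  have tM: "topspace M = Ms" by (simp add: Meq)
  obtain n where loc: "\<forall>x\<in>topspace M. \<exists>U. openin M U \<and> x \<in> U \<and> subtopology M U homeomorphic_space Euclidean_space n"
    using man unfolding manifold_def by blast
  have conn: "connected_space M" using man unfolding manifold_def by blast
  define sep where "sep A \<longleftrightarrow> (\<exists>C. countable C \<and> C \<subseteq> Ms \<and> A \<subseteq> M closure_of C)" for A
  have locsep: "\<exists>r>0. sep (mball x r)" if x: "x \<in> Ms" for x
  proof -
    obtain U where U: "openin M U" "x \<in> U" "subtopology M U homeomorphic_space Euclidean_space n"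
      using loc x Meq by auto
    then have scU: "second_countable (subtopology M U)"
      using homeomorphic_space_second_countability sc_Euclidean_space by blast
    obtain r where r: "r > 0" "mball x r \<subseteq> U" using U(1,2) Meq openin_mtopology by blast
    have "subtopology (subtopology M U) (mball x r) = subtopology M (mball x r)"
      using r(2) by (simp add: subtopology_subtopology inf_absorb2)
    then have "second_countable (subtopology M (mball x r))"
      using second_countable_subtopology[OF scU, of "mball x r"] by simp
    then have "separable_space (subtopology M (mball x r))" by (rule second_countable_imp_separable_space)
    then obtain C where C: "countable C" "C \<subseteq> topspace (subtopology M (mball x r))"
        "(subtopology M (mball x r)) closure_of C = topspace (subtopology M (mball x r))"
      unfolding separable_space_def by blast
    have tb: "topspace (subtopology M (mball x r)) = mball x r"
      using mball_subset_mspace[of x r] by (auto simp: Meq)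
    have "mball x r \<subseteq> M closure_of C"
      using C(3) closure_of_subtopology_subset[of M "mball x r" C] tb by simp
    moreover have "C \<subseteq> Ms" using C(2) tb mball_subset_mspace by blast
    ultimately show ?thesis using r(1) C(1) unfolding sep_def by blast
  qed
  have sep_mono: "sep A" if "sep B" "A \<subseteq> B" for A B using that unfolding sep_def by blast
  have sep_UN: "sep (\<Union>i\<in>I. A i)" if "countable I" "\<And>i. i \<in> I \<Longrightarrow> sep (A i)" for I and A :: "'x \<Rightarrow> _"
  proof -
    have "\<forall>i\<in>I. \<exists>C. countable C \<and> C \<subseteq> Ms \<and> A i \<subseteq> M closure_of C"
      using that(2) unfolding sep_def by blast
    then obtain C where C: "\<And>i. i \<in> I \<Longrightarrow> countable (C i) \<and> C i \<subseteq> Ms \<and> A i \<subseteq> M closure_of (C i)"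
      by metis
    have "countable (\<Union>i\<in>I. C i)" using C that(1) by blast
    moreover have "(\<Union>i\<in>I. C i) \<subseteq> Ms" using C by blast
    moreover have "(\<Union>i\<in>I. A i) \<subseteq> M closure_of (\<Union>i\<in>I. C i)"
    proof -
      have "A i \<subseteq> M closure_of (\<Union>i\<in>I. C i)" if "i \<in> I" for i
        using C[OF that] closure_of_mono[of "C i" "\<Union>i\<in>I. C i" M] that by blast
      then show ?thesis by blast
    qed
    ultimately show ?thesis unfolding sep_def by blast
  qed
  define N where "N A = \<Union>{mball y r | y r. y \<in> A \<and> 0 < r \<and> sep (mball y (2*r))}" for A
  have N_sub: "N A \<subseteq> Ms" for A unfolding N_def using mball_subset_mspace by blast
  have N_sep: "sep (N A)" if A: "sep A" for A
  proof -
    obtain C where C: "countable C" "C \<subseteq> Ms" "A \<subseteq> M closure_of C" using A unfolding sep_def by blast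
    define K where "K = {(c,q). c \<in> C \<and> q \<in> \<rat> \<and> sep (mball c q)}"
    have "K \<subseteq> C \<times> \<rat>" unfolding K_def by blast
    then have cK: "countable K" using C(1) countable_rat by (meson countable_SIGMA countable_subset)
    have "N A \<subseteq> (\<Union>k\<in>K. mball (fst k) (snd k))"
    proof
      fix z assume "z \<in> N A"
      then obtain y r where yr: "y \<in> A" "0 < r" "sep (mball y (2*r))" "z \<in> mball y r"
        unfolding N_def by blast
      have "y \<in> M closure_of C" using yr(1) C(3) by blast
      moreover have "openin M (mball y (r/4))" using Meq by simp
      moreover have "y \<in> mball y (r/4)" using yr(2,4) by simp
      ultimately obtain c where c: "c \<in> C" "c \<in> mball y (r/4)"
        unfolding in_closure_of by blast
      obtain q where q: "q \<in> \<rat>" "5*r/4 < q" "q < 7*r/4" using Rats_dense_in_real[of "5*r/4" "7*r/4"] yr(2) by auto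
      have "d c y < r/4" using c(2) commute by simp
      then have "mball c q \<subseteq> mball y (2*r)" using q yr(4) by (intro mball_subset) auto
      then have "sep (mball c q)" using sep_mono yr(3) by blast
      then have "(c,q) \<in> K" unfolding K_def using c(1) q(1) by simp
      moreover have "z \<in> mball c q"
      proof -
        have "d c z \<le> d c y + d y z" using triangle c(2) yr(4) by auto
        then show ?thesis using c(2) yr(4) \<open>d c y < r/4\<close> q(2) by auto
      qed
      ultimately show "z \<in> (\<Union>k\<in>K. mball (fst k) (snd k))" by force
    qed
    moreover have "sep (\<Union>k\<in>K. mball (fst k) (snd k))"
      by (rule sep_UN[OF cK]) (auto simp: K_def)
    ultimately show ?thesis using sep_mono by blast
  qed
  have A_sub_N: "A \<subseteq> N A" if As: "A \<subseteq> Ms" for A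
  proof
    fix y assume "y \<in> A"
    then have "y \<in> Ms" using As by blast
    then obtain r where "r > 0" "sep (mball y r)" using locsep by blast
    then have "sep (mball y (2*(r/2)))" by simp
    moreover have "y \<in> mball y (r/2)" using \<open>r>0\<close> \<open>y \<in> Ms\<close> by auto
    ultimately show "y \<in> N A" unfolding N_def using \<open>y \<in> A\<close> \<open>r>0\<close>
      by (intro UnionI[of "mball y (r/2)"]) (auto intro!: exI[of _ y] exI[of _ "r/2"])
  qed
  show ?thesis
  proof (cases "Ms = {}")
    case True
    then show ?thesis using tM by (intro exI[of _ "{}"]) simp
  next
    case False
    then obtain x0 where x0: "x0 \<in> Ms" by blast
    define A where "A k = (N ^^ k) {x0}" for k
    have AS: "A (Suc k) = N (A k)" for k by (simp add: A_def)
    have Asub: "A k \<subseteq> Ms" for k by (cases k) (use x0 N_sub in \<open>auto simp: A_def\<close>)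
    have Asep: "sep (A k)" for k
    proof (induction k)
      case 0
      have "{x0} \<subseteq> M closure_of {x0}" using x0 Meq by (intro closure_of_subset) simp
      then show ?case unfolding sep_def A_def using x0 by (intro exI[of _ "{x0}"]) auto
    next
      case (Suc k) then show ?case using N_sep by (simp add: AS)
    qed
    define U where "U = (\<Union>k. A k)"
    have sepU: "sep U" unfolding U_def by (rule sep_UN) (auto intro: Asep)
    have Usub: "U \<subseteq> Ms" using Asub unfolding U_def by blast
    have openU: "openin M U"
      unfolding Meq openin_mtopology
    proof (intro conjI allI impI)
      show "U \<subseteq> Ms" by (fact Usub)
      fix z assume "z \<in> U"
      then obtain k where k: "z \<in> A k" unfolding U_def by blast
      then obtain r where r: "r > 0" "sep (mball z r)" using locsep Asub by blast
      have "mball z (r/2) \<subseteq> N (A k)" unfolding N_def using k r by (auto intro!: exI[of _ z] exI[of _ "r/2"])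
      then have "mball z (r/2) \<subseteq> U" unfolding U_def using AS by blast
      then show "\<exists>r>0. mball z r \<subseteq> U" using r(1) by (intro exI[of _ "r/2"]) simp
    qed
    have closedU: "closedin M U"
    proof -
      have "M closure_of U \<subseteq> U"
      proof
        fix z assume z: "z \<in> M closure_of U"
        then have zM: "z \<in> Ms" using Meq closure_of_subset_topspace by fastforce
        obtain s where s: "s > 0" "sep (mball z s)" using locsep zM by blast
        define r where "r = s/5"
        have "openin M (mball z r)" using Meq by simp
        moreover have "z \<in> mball z r" using zM s(1) r_def by simp
        ultimately obtain y where y: "y \<in> U" "y \<in> mball z r" using z unfolding in_closure_of by blast
        then obtain k where k: "y \<in> A k" unfolding U_def by blast
        have "d y z < r" using y(2) commute by simp
        then have "mball y (2*(2*r)) \<subseteq> mball z s" using zM r_def by (intro mball_subset) auto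
        then have "sep (mball y (2*(2*r)))" using s(2) sep_mono by blast
        moreover have "z \<in> mball y (2*r)" using y(2) \<open>d y z < r\<close> zM r_def s(1) by auto
        ultimately have "z \<in> N (A k)" unfolding N_def using k r_def s(1)
          by (intro UnionI[of "mball y (2*r)"]) (auto intro!: exI[of _ y] exI[of _ "2*r"])
        then show "z \<in> U" unfolding U_def using AS by blast
      qed
      then show ?thesis using Usub Meq closure_of_subset_eq by fastforce
    qed
    have "U = topspace M"
      using conn openU closedU x0 unfolding connected_space_clopen_in
      by (metis A_def U_def UNIV_I UN_I empty_iff funpow_0 singletonI)
    then have "sep Ms" using sepU Meq by simp
    then obtain C where "countable C" "C \<subseteq> Ms" "Ms \<subseteq> M closure_of C" unfolding sep_def by blast
    moreover have "M closure_of C \<subseteq> Ms" using Meq closure_of_subset_topspace by fastforce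
    ultimately show ?thesis using Meq by (intro exI[of _ C]) auto
  qed
qed

lemma L_dense_rat:
  assumes y: "y \<in> (long_ray_open::('w::wellorder\<times>real) set)"
  shows "y \<in> long_ray_top closure_of {z \<in> long_ray_open. fst z = fst y \<and> snd z \<in> \<rat>}"
  unfolding in_closure_of
proof (intro conjI allI impI)
  show "y \<in> topspace long_ray_top" using y by (simp add: L_topspace)
  fix U assume U: "y \<in> U \<and> openin long_ray_top U"
  then obtain b where b: "lex_less y b" "\<forall>z\<in>long_ray_open. \<not> lex_less z y \<and> lex_less z b \<longrightarrow> z \<in> U"
    using L_right by blast
  define m where "m = (if fst b = fst y then min 1 (snd b) else 1)"
  have "snd y < m" using b(1) y unfolding m_def lex_less_def by (auto simp: LRO_iff)
  then obtain r where r: "r \<in> \<rat>" "snd y < r" "r < m" using Rats_dense_in_real by blast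
  have r1: "r < 1" using r(3) unfolding m_def by (auto split: if_splits)
  have r0: "0 < r" using r(2) y by (auto simp: LRO_iff)
  have zL: "(fst y, r) \<in> long_ray_open" using r0 r1 by (auto simp: LRO_iff)
  have "\<not> lex_less (fst y, r) y" using r(2) by (auto simp: lex_less_def)
  moreover have "lex_less (fst y, r) b"
  proof (cases "fst b = fst y")
    case True then show ?thesis using r(3) unfolding m_def lex_less_def by auto
  next
    case False then have "fst y < fst b" using b(1) unfolding lex_less_def by auto
    then show ?thesis unfolding lex_less_def by auto
  qed
  ultimately have "(fst y, r) \<in> U" using b(2) zL by blast
  then show "\<exists>z. z \<in> {z \<in> long_ray_open. fst z = fst y \<and> snd z \<in> \<rat>} \<and> z \<in> U"
    using zL r(1) by (intro exI[of _ "(fst y, r)"]) simp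
qed

lemma countable_Y: "countable {z \<in> (long_ray_open::('w::wellorder\<times>real) set). fst z = \<xi> \<and> snd z \<in> \<rat>}"
proof -
  have "{z \<in> (long_ray_open::('w\<times>real) set). fst z = \<xi> \<and> snd z \<in> \<rat>} \<subseteq> (\<lambda>r. (\<xi>, r)) ` \<rat>"
  proof
    fix z assume z: "z \<in> {z \<in> (long_ray_open::('w\<times>real) set). fst z = \<xi> \<and> snd z \<in> \<rat>}"
    then have "z = (\<xi>, snd z)" by (cases z) simp
    then show "z \<in> (\<lambda>r. (\<xi>, r)) ` \<rat>" using z by blast
  qed
  then show ?thesis by (rule countable_subset) (intro countable_image countable_rat)
qed

theorem corollary2p3:
  fixes M :: "'a topology"
    and H :: "('a \<times> ('w::wellorder \<times> real)) \<times> real \<Rightarrow> 'a \<times> ('w \<times> real)"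
  assumes omega1_uncountable: "\<not> countable (UNIV :: 'w set)"
    and omega1_segments: "\<forall>w::'w. countable {..<w}"
    and "manifold M" and "metrizable_space M"
    and "isotopy (prod_topology M long_ray_top) H"
  shows "\<exists>(\<alpha>::'w) G. isotopy M G \<and>
           (\<forall>x\<in>topspace M. \<forall>t\<in>{0..1}.
              (\<lambda>p. H (p, t)) ` ({x} \<times> long_ray_tail \<alpha>) = {G (x, t)} \<times> long_ray_tail \<alpha>)"
proof -
  note unc = omega1_uncountable and seg = omega1_segments
  have man: "manifold M" and met: "metrizable_space M" and iso: "isotopy (prod_topology M long_ray_top) H"
    using assms by auto
  define L where "L = (long_ray_top :: ('w \<times> real) topology)"
  define LRO where "LRO = (long_ray_open :: ('w \<times> real) set)"
  define X where "X = prod_topology M L"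
  define I where "I = top_of_set {0..1::real}"
  have tL: "topspace L = LRO" by (simp add: L_def LRO_def L_topspace)
  have tX: "topspace X = topspace M \<times> LRO" by (simp add: X_def tL)
  have tI: "topspace I = {0..1}" by (simp add: I_def)
  have Hc: "continuous_map (prod_topology X I) X H"
    and Hh: "\<And>t. t \<in> {0..1} \<Longrightarrow> homeomorphic_map X X (\<lambda>z. H (z, t))"
    using iso unfolding isotopy_def X_def I_def L_def by auto
  obtain Ms d where ms: "Metric_space Ms d" and Meq: "M = Metric_space.mtopology Ms d"
    using met unfolding metrizable_space_def by blast
  have haus: "Hausdorff_space M" using man unfolding manifold_def by blast
  obtain D where D: "countable D" "D \<subseteq> topspace M" "M closure_of D = topspace M"
    using manifold_separable[OF man met] by blast
  obtain T where T: "countable T" "T \<subseteq> topspace I" "I closure_of T = topspace I"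
  proof -
    have "second_countable I" unfolding I_def by (intro second_countable_subtopology sc_euclidean)
    then show ?thesis using second_countable_imp_separable_space that unfolding separable_space_def by blast
  qed
  have Hin: "H ((x,y),t) \<in> topspace M \<times> LRO" if "x \<in> topspace M" "y \<in> LRO" "t \<in> {0..1}" for x y t
    using continuous_map_image_subset_topspace[OF Hc] that tX tI by auto
  have cH1: "continuous_map (prod_topology M I) X (\<lambda>(x,t). H ((x,y),t))" if "y \<in> LRO" for y
  proof -
    have "continuous_map (prod_topology M I) (prod_topology X I) (\<lambda>(x,t). ((x,y),t))"
      using that tL unfolding X_def
      by (auto intro!: continuous_map_pairedI continuous_map_fst continuous_map_snd
          simp: case_prod_unfold)
    then show ?thesis using continuous_map_compose[OF _ Hc] by (simp add: o_def case_prod_unfold)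
  qed
  have cH2: "continuous_map L X (\<lambda>y. H ((x,y),t))" if "x \<in> topspace M" "t \<in> {0..1}" for x t
  proof -
    have "continuous_map L (prod_topology X I) (\<lambda>y. ((x,y),t))"
      using that tI unfolding X_def
      by (auto intro!: continuous_map_pairedI)
    then show ?thesis using continuous_map_compose[OF _ Hc] by (simp add: o_def)
  qed
  have cH3: "continuous_map I X (\<lambda>t. H ((x,y),t))" if "x \<in> topspace M" "y \<in> LRO" for x y
  proof -
    have "continuous_map I (prod_topology X I) (\<lambda>t. ((x,y),t))"
      using that tL unfolding X_def
      by (auto intro!: continuous_map_pairedI)
    then show ?thesis using continuous_map_compose[OF _ Hc] by (simp add: o_def)
  qed
  \<comment> \<open>Step 1: eventual constancy of the first coordinate\<close>
  have botb: "(LEAST w::'w. True) \<le> w" for w by (rule Least_le) simp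
  have LROw: "(w, 0) \<in> LRO" if "(LEAST w::'w. True) < w" for w
    using that by (auto simp: LRO_def LRO_iff)
  have cq: "continuous_map long_ray_top (Metric_space.mtopology Ms d) (\<lambda>y. fst (H ((x,y),t)))"
    if "x \<in> topspace M" "t \<in> {0..1}" for x t
    using continuous_map_fst_of[OF cH2[OF that, unfolded X_def]] Meq L_def by (simp add: o_def)
  have "\<forall>xt\<in>D\<times>T. \<exists>\<beta>. (LEAST w::'w. True) < \<beta> \<and> (\<forall>y\<in>long_ray_open. \<forall>z\<in>long_ray_open.
           \<not> lex_less y (\<beta>,0) \<and> \<not> lex_less z (\<beta>,0) \<longrightarrow> fst (H ((fst xt,y),snd xt)) = fst (H ((fst xt,z),snd xt)))"
  proof
    fix xt assume "xt \<in> D \<times> T"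
    then have "fst xt \<in> topspace M" "snd xt \<in> {0..1}" using D(2) T(2) tI by auto
    then show "\<exists>\<beta>. (LEAST w::'w. True) < \<beta> \<and> (\<forall>y\<in>long_ray_open. \<forall>z\<in>long_ray_open.
           \<not> lex_less y (\<beta>,0) \<and> \<not> lex_less z (\<beta>,0) \<longrightarrow> fst (H ((fst xt,y),snd xt)) = fst (H ((fst xt,z),snd xt)))"
      by (rule L_evconst[OF unc seg ms cq])
  qed
  from bchoice[OF this] obtain B where B0: "\<forall>xt\<in>D\<times>T. (LEAST w::'w. True) < B xt \<and> (\<forall>y\<in>long_ray_open. \<forall>z\<in>long_ray_open.
           \<not> lex_less y (B xt,0) \<and> \<not> lex_less z (B xt,0) \<longrightarrow> fst (H ((fst xt,y),snd xt)) = fst (H ((fst xt,z),snd xt)))" ..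
  note B = B0[rule_format]
  have "countable (insert (LEAST w::'w. True) (B ` (D\<times>T)))" using D(1) T(1) by simp
  from w_bound[OF unc seg this] obtain \<beta> where \<beta>: "\<forall>s\<in>insert (LEAST w::'w. True) (B ` (D\<times>T)). s < \<beta>" ..
  have \<beta>L: "(\<beta>,0) \<in> LRO" using \<beta> LROw by blast
  have fib0: "fst (H ((x,y),t)) = fst (H ((x,(\<beta>,0)),t))"
    if "x \<in> D" "t \<in> T" "y \<in> LRO" "\<not> lex_less y (\<beta>,0)" for x y t
  proof -
    have xt: "(x,t) \<in> D\<times>T" using that by simp
    have Bb: "B (x,t) < \<beta>" using \<beta> xt by blast
    have "\<not> fst y < \<beta>" using that(4) by (simp add: lex_less_def)
    then have "B (x,t) < fst y" using Bb by (meson not_less less_le_trans)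
    then have "\<not> fst y < B (x,t)" "fst y \<noteq> B (x,t)" by auto
    then have 1: "\<not> lex_less y (B (x,t),0)" unfolding lex_less_def by simp
    have "\<not> \<beta> < B (x,t)" "\<beta> \<noteq> B (x,t)" using Bb by auto
    then have 2: "\<not> lex_less (\<beta>,0) (B (x,t),0)" unfolding lex_less_def by simp
    have "\<forall>y\<in>long_ray_open. \<forall>z\<in>long_ray_open.
           \<not> lex_less y (B (x,t),0) \<and> \<not> lex_less z (B (x,t),0) \<longrightarrow> fst (H ((x,y),t)) = fst (H ((x,z),t))"
      using conjunct2[OF B[OF xt]] by (simp only: fst_conv snd_conv)
    then show ?thesis using 1 2 that(3) \<beta>L unfolding LRO_def by blast
  qed
  have fib: "fst (H ((x,y),t)) = fst (H ((x,(\<beta>,0)),t))"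
    if "x \<in> topspace M" "t \<in> {0..1}" "y \<in> LRO" "\<not> lex_less y (\<beta>,0)" for x y t
  proof -
    have "(x,t) \<in> prod_topology M I closure_of (D \<times> T)"
      using that D(3) T(3) tI by (simp add: closure_of_Times)
    then have "(fst \<circ> (\<lambda>(x,t). H ((x,y),t))) (x,t) = (fst \<circ> (\<lambda>(x,t). H ((x,(\<beta>,0)),t))) (x,t)"
    proof (rule forall_in_closure_of_eq[OF _ haus])
      show "continuous_map (prod_topology M I) M (fst \<circ> (\<lambda>(x,t). H ((x,y),t)))"
        using continuous_map_fst_of[OF cH1[OF that(3), unfolded X_def]] .
      show "continuous_map (prod_topology M I) M (fst \<circ> (\<lambda>(x,t). H ((x,(\<beta>,0)),t)))"
        using continuous_map_fst_of[OF cH1[OF \<beta>L, unfolded X_def]] .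
      fix xt assume "xt \<in> D \<times> T"
      then show "(fst \<circ> (\<lambda>(x,t). H ((x,y),t))) xt = (fst \<circ> (\<lambda>(x,t). H ((x,(\<beta>,0)),t))) xt"
      proof -
        obtain x' t' where "xt = (x',t')" "x' \<in> D" "t' \<in> T" using \<open>xt \<in> D \<times> T\<close> by blast
        then show ?thesis using fib0[OF _ _ that(3,4)] by simp
      qed
    qed
    then show ?thesis by simp
  qed
  define K where "K t = (SOME g. homeomorphic_maps X X (\<lambda>z. H (z,t)) g)" for t
  have K: "homeomorphic_maps X X (\<lambda>z. H (z,t)) (K t)" if "t \<in> {0..1}" for t
  proof -
    have "\<exists>g. homeomorphic_maps X X (\<lambda>z. H (z,t)) g" using Hh[OF that] homeomorphic_map_maps by blast
    then show ?thesis unfolding K_def by (rule someI_ex)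
  qed
  have Kc: "continuous_map X X (K t)" if "t \<in> {0..1}" for t
    using K[OF that] unfolding homeomorphic_maps_def by blast
  have KH: "H (K t z, t) = z" if "t \<in> {0..1}" "z \<in> topspace X" for t z
    using K[OF that(1)] that(2) unfolding homeomorphic_maps_def by blast
  have HK: "K t (H (w, t)) = w" if "t \<in> {0..1}" "w \<in> topspace X" for t w
    using K[OF that(1)] that(2) unfolding homeomorphic_maps_def by blast
  have Kin: "K t z \<in> topspace X" if "t \<in> {0..1}" "z \<in> topspace X" for t z
    using continuous_map_image_subset_topspace[OF Kc[OF that(1)]] that(2) by blast
  define Y where "Y \<xi> = {z \<in> LRO. fst z = \<xi> \<and> snd z \<in> \<rat>}" for \<xi>
  have cY: "countable (Y \<xi>)" for \<xi> unfolding Y_def LRO_def by (rule countable_Y)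
  define S where "S \<xi> = insert \<xi> ((\<lambda>(x,z,t). fst (snd (H ((x,z),t)))) ` (D \<times> Y \<xi> \<times> T) \<union>
       (\<lambda>(x,z,t). fst (snd (K t (x,z)))) ` (D \<times> Y \<xi> \<times> T))" for \<xi>
  have cS: "countable (S \<xi>)" for \<xi>
    unfolding S_def using D(1) T(1) cY by (intro countable_insert countable_Un countable_image countable_SIGMA) auto
  define F where "F \<xi> = (SOME u. \<forall>s\<in>S \<xi>. s < u)" for \<xi>
  have F: "\<forall>s\<in>S \<xi>. s < F \<xi>" for \<xi>
    unfolding F_def by (rule someI_ex) (rule w_bound[OF unc seg cS])
  have FL: "(F \<xi>, 0) \<in> LRO" for \<xi>
  proof -
    have "\<xi> < F \<xi>" using F[of \<xi>] unfolding S_def by blast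
    then show ?thesis using botb[of \<xi>] LROw by (meson le_less_trans)
  qed
  have fstlt: "fst y < \<alpha>" if "y \<in> LRO" "lex_less y (\<alpha>,0)" for y \<alpha>
    using that by (auto simp: lex_less_def LRO_def LRO_iff)
  have claimA: "lex_less (snd (H ((x,y),t))) (\<alpha>,0)"
    if good: "\<forall>\<xi><\<alpha>. F \<xi> < \<alpha>" and x: "x \<in> topspace M" and t: "t \<in> {0..1}" and y: "y \<in> LRO"
      and ya: "lex_less y (\<alpha>,0)" for \<alpha> x y t
  proof -
    define \<xi> where "\<xi> = fst y"
    have \<xi>a: "\<xi> < \<alpha>" using fstlt[OF y ya] \<xi>_def by simp
    define c where "c = (F \<xi>, 0::real)"
    have cL: "c \<in> long_ray_open" using FL c_def LRO_def by simp
    define Cl where "Cl = {w \<in> topspace (prod_topology X I). (snd \<circ> H) w \<in> {z \<in> long_ray_open. \<not> lex_less c z}}"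
    have "closedin (prod_topology X I) Cl"
      unfolding Cl_def
      by (rule closedin_continuous_map_preimage[OF _ L_closed_le[OF cL]])
        (use continuous_map_snd_of[OF Hc[unfolded X_def]] in \<open>simp add: X_def L_def o_def\<close>)
    moreover have "(D \<times> Y \<xi>) \<times> T \<subseteq> Cl"
    proof
      fix w assume w: "w \<in> (D \<times> Y \<xi>) \<times> T"
      then obtain d z s where wd: "w = ((d,z),s)" "d \<in> D" "z \<in> Y \<xi>" "s \<in> T" by auto
      have dM: "d \<in> topspace M" and zL: "z \<in> LRO" and s01: "s \<in> {0..1}"
        using wd D(2) T(2) tI unfolding Y_def by auto
      have "fst (snd (H ((d,z),s))) \<in> S \<xi>" unfolding S_def using wd by force
      then have "fst (snd (H ((d,z),s))) < F \<xi>" using F by blast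
      then have "lex_less (snd (H ((d,z),s))) c" unfolding c_def lex_less_def by simp
      then have "\<not> lex_less c (snd (H ((d,z),s)))" using lex_asym by blast
      moreover have "snd (H ((d,z),s)) \<in> long_ray_open" using Hin[OF dM zL s01] LRO_def by auto
      moreover have "w \<in> topspace (prod_topology X I)" using wd dM zL s01 tX tI by simp
      ultimately show "w \<in> Cl" unfolding Cl_def using wd by simp
    qed
    ultimately have clos: "prod_topology X I closure_of ((D \<times> Y \<xi>) \<times> T) \<subseteq> Cl"
      by (rule closure_of_minimal[rotated])
    have "y \<in> L closure_of Y \<xi>"
      using L_dense_rat[of y] y unfolding Y_def \<xi>_def L_def LRO_def by simp
    then have "((x,y),t) \<in> prod_topology X I closure_of ((D \<times> Y \<xi>) \<times> T)"
      using x t D(3) T(3) tI by (simp add: closure_of_Times X_def)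
    then have "((x,y),t) \<in> Cl" using clos by blast
    then have "\<not> lex_less c (snd (H ((x,y),t)))" unfolding Cl_def by simp
    then have "snd (H ((x,y),t)) = c \<or> lex_less (snd (H ((x,y),t))) c" using lex_not_less by blast
    moreover have "lex_less c (\<alpha>,0)" using good \<xi>a unfolding c_def lex_less_def by simp
    ultimately show ?thesis using lex_trans by blast
  qed
  have claimB: "lex_less (snd (K t z)) (\<alpha>,0)"
    if good: "\<forall>\<xi><\<alpha>. F \<xi> < \<alpha>" and t: "t \<in> T" and z: "z \<in> topspace X"
      and za: "lex_less (snd z) (\<alpha>,0)" for \<alpha> t z
  proof -
    have t01: "t \<in> {0..1}" using t T(2) tI by auto
    obtain x y where zxy: "z = (x,y)" "x \<in> topspace M" "y \<in> LRO" using z tX by auto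
    define \<xi> where "\<xi> = fst y"
    have \<xi>a: "\<xi> < \<alpha>" using fstlt[OF zxy(3)] za zxy(1) \<xi>_def by simp
    define c where "c = (F \<xi>, 0::real)"
    have cL: "c \<in> long_ray_open" using FL c_def LRO_def by simp
    define Cl where "Cl = {w \<in> topspace X. snd (K t w) \<in> {z \<in> long_ray_open. \<not> lex_less c z}}"
    have "closedin X Cl"
      unfolding Cl_def
      by (rule closedin_continuous_map_preimage[OF _ L_closed_le[OF cL]])
        (use continuous_map_snd_of[OF Kc[OF t01, unfolded X_def]] in \<open>simp add: X_def L_def o_def\<close>)
    moreover have "D \<times> Y \<xi> \<subseteq> Cl"
    proof
      fix w assume w: "w \<in> D \<times> Y \<xi>"
      then obtain d u where wd: "w = (d,u)" "d \<in> D" "u \<in> Y \<xi>" by auto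
      have dM: "d \<in> topspace M" and uL: "u \<in> LRO"
        using wd D(2) unfolding Y_def by auto
      have wX: "w \<in> topspace X" using wd dM uL tX by simp
      have "(d,u,t) \<in> D \<times> Y \<xi> \<times> T" using wd t by simp
      then have "(\<lambda>(x,z,t). fst (snd (K t (x,z)))) (d,u,t) \<in> (\<lambda>(x,z,t). fst (snd (K t (x,z)))) ` (D \<times> Y \<xi> \<times> T)"
        by (rule imageI)
      then have "fst (snd (K t (d,u))) \<in> S \<xi>" unfolding S_def by simp
      then have "fst (snd (K t (d,u))) < F \<xi>" using F by blast
      then have "lex_less (snd (K t (d,u))) c" unfolding c_def lex_less_def by simp
      then have "\<not> lex_less c (snd (K t (d,u)))" using lex_asym by blast
      moreover have "snd (K t (d,u)) \<in> long_ray_open"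
      proof -
        have "K t w \<in> topspace M \<times> LRO" using Kin[OF t01 wX] tX by simp
        then have "snd (K t w) \<in> LRO" by (simp add: mem_Times_iff)
        then show ?thesis using wd(1) unfolding LRO_def by simp
      qed
      ultimately show "w \<in> Cl" unfolding Cl_def using wd wX by simp
    qed
    ultimately have clos: "X closure_of (D \<times> Y \<xi>) \<subseteq> Cl"
      by (rule closure_of_minimal[rotated])
    have "y \<in> L closure_of Y \<xi>"
      using L_dense_rat[of y] zxy(3) unfolding Y_def \<xi>_def L_def LRO_def by simp
    then have "(x,y) \<in> X closure_of (D \<times> Y \<xi>)"
      using zxy D(3) by (simp add: closure_of_Times X_def)
    then have "z \<in> Cl" using clos zxy(1) by blast
    then have "\<not> lex_less c (snd (K t z))" unfolding Cl_def by simp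
    then have "snd (K t z) = c \<or> lex_less (snd (K t z)) c" using lex_not_less by blast
    moreover have "lex_less c (\<alpha>,0)" using good \<xi>a unfolding c_def lex_less_def by simp
    ultimately show ?thesis using lex_trans by blast
  qed
  have claimC: "\<not> lex_less (snd (H ((x,y),t))) (\<alpha>,0)"
    if good: "\<forall>\<xi><\<alpha>. F \<xi> < \<alpha>" and t: "t \<in> T" and x: "x \<in> topspace M" and y: "y \<in> LRO"
      and ya: "\<not> lex_less y (\<alpha>,0)" for \<alpha> x y t
  proof
    assume a: "lex_less (snd (H ((x,y),t))) (\<alpha>,0)"
    have t01: "t \<in> {0..1}" using t T(2) tI by auto
    have wX: "((x,y)) \<in> topspace X" using x y tX by simp
    have "H ((x,y),t) \<in> topspace X" using Hin[OF x y t01] tX by simp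
    from claimB[OF good t this a] have "lex_less (snd (K t (H ((x,y),t)))) (\<alpha>,0)" .
    then show False using HK[OF t01 wX] ya by simp
  qed
  have claimD: "lex_less (snd (H ((x,y),t))) (\<alpha>,0) \<longleftrightarrow> lex_less y (\<alpha>,0)"
    if good: "\<forall>\<xi><\<alpha>. F \<xi> < \<alpha>" and aL: "(\<alpha>,0) \<in> LRO" and t: "t \<in> {0..1}" and x: "x \<in> topspace M" and y: "y \<in> LRO"
      for \<alpha> x y t
  proof
    assume "lex_less y (\<alpha>,0)"
    then show "lex_less (snd (H ((x,y),t))) (\<alpha>,0)" using claimA[OF good x t y] by blast
  next
    assume a: "lex_less (snd (H ((x,y),t))) (\<alpha>,0)"
    show "lex_less y (\<alpha>,0)"
    proof (rule ccontr)
      assume ya: "\<not> lex_less y (\<alpha>,0)"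
      have "t \<in> I closure_of T" using t T(3) tI by simp
      then have "\<not> lex_less (snd (H ((x,y),t))) (\<alpha>,0)"
      proof (rule forall_in_closure_of)
        fix s assume "s \<in> T"
        then show "\<not> lex_less (snd (H ((x,y),s))) (\<alpha>,0)" using claimC[OF good _ x y ya] by blast
      next
        have aL': "(\<alpha>,0) \<in> long_ray_open" using aL LRO_def by simp
        have "closedin I {s \<in> topspace I. snd (H ((x,y),s)) \<in> {z \<in> long_ray_open. \<not> lex_less z (\<alpha>,0)}}"
          by (rule closedin_continuous_map_preimage[OF _ L_closed_ge[OF aL']])
            (use continuous_map_snd_of[OF cH3[OF x y, unfolded X_def]] in \<open>simp add: L_def o_def\<close>)
        moreover have "{s \<in> topspace I. snd (H ((x,y),s)) \<in> {z \<in> long_ray_open. \<not> lex_less z (\<alpha>,0)}}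
            = {s \<in> topspace I. \<not> lex_less (snd (H ((x,y),s))) (\<alpha>,0)}"
        proof -
          have hs: "snd (H ((x,y),s)) \<in> long_ray_open" if "s \<in> topspace I" for s
          proof -
            have "H ((x,y),s) \<in> topspace M \<times> LRO" using Hin[OF x y] that tI by simp
            then show ?thesis unfolding LRO_def by (simp add: mem_Times_iff)
          qed
          show ?thesis using hs by blast
        qed
        ultimately show "closedin I {s \<in> topspace I. \<not> lex_less (snd (H ((x,y),s))) (\<alpha>,0)}" by simp
      qed
      then show False using a by simp
    qed
  qed
  have LROgt: "(\<alpha>,0) \<in> LRO" if "\<xi> < \<alpha>" for \<xi> \<alpha>
    using botb[of \<xi>] that LROw by (meson le_less_trans)
  define G where "G = (\<lambda>(x,t). fst (H ((x,(\<beta>,0)),t)))"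
  have ge_trans: "\<not> lex_less y (\<beta>',0)" if "\<not> lex_less y (\<alpha>,0)" "\<beta>' < \<alpha>" for y \<alpha> \<beta>'
    using that unfolding lex_less_def by (auto simp: not_less)
  have fibG: "fst (H ((x,y),t)) = G (x,t)"
    if "x \<in> topspace M" "t \<in> {0..1}" "y \<in> LRO" "\<not> lex_less y (\<alpha>,0)" "\<beta> < \<alpha>" for x y t \<alpha>
    using fib[OF that(1-3) ge_trans[OF that(4,5)]] unfolding G_def by simp
  have Hsplit: "H ((x,y),t) = (fst (H ((x,y),t)), snd (H ((x,y),t)))" for x y t by simp
  have sndL: "snd (H ((x,y),t)) \<in> LRO" if "x \<in> topspace M" "y \<in> LRO" "t \<in> {0..1}" for x y t
    using Hin[OF that] by (simp add: mem_Times_iff)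
  have fstM: "fst (H ((x,y),t)) \<in> topspace M" if "x \<in> topspace M" "y \<in> LRO" "t \<in> {0..1}" for x y t
    using Hin[OF that] by (simp add: mem_Times_iff)
  have inj: "x = x'" if x: "x \<in> topspace M" and x': "x' \<in> topspace M" and t: "t \<in> {0..1}"
    and eq: "G (x,t) = G (x',t)" for x x' t
  proof -
    define w where "w = G (x,t)"
    have wM: "w \<in> topspace M" unfolding w_def G_def using fstM[OF x \<beta>L t] by simp
    have "continuous_map L X (\<lambda>y. (w,y))" unfolding X_def using wM by (auto intro!: continuous_map_pairedI)
    then have "continuous_map L X (K t \<circ> (\<lambda>y. (w,y)))" using Kc[OF t] by (rule continuous_map_compose)
    then have "continuous_map long_ray_top (Metric_space.mtopology Ms d) (\<lambda>y. fst (K t (w,y)))"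
      using continuous_map_fst_of[of L M L "K t \<circ> (\<lambda>y. (w,y))"] 
      unfolding X_def L_def Meq[symmetric] by (simp add: o_def)
    from L_evconst[OF unc seg ms this, of \<beta>] obtain \<gamma> where \<gamma>: "\<beta> < \<gamma>"
      "\<forall>y\<in>long_ray_open. \<forall>z\<in>long_ray_open. \<not> lex_less y (\<gamma>,0) \<and> \<not> lex_less z (\<gamma>,0) \<longrightarrow>
         fst (K t (w,y)) = fst (K t (w,z))" by blast
    from w_club[OF unc seg, of \<gamma> F] obtain \<alpha>1 where \<alpha>1: "\<gamma> < \<alpha>1" "\<forall>\<xi><\<alpha>1. F \<xi> < \<alpha>1" by blast
    have a1L: "(\<alpha>1,0) \<in> LRO" using LROgt[OF \<alpha>1(1)] .
    have b1: "\<beta> < \<alpha>1" using \<gamma>(1) \<alpha>1(1) by simp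
    have key: "fst (K t (w, snd (H ((v,(\<alpha>1,0)),t)))) = v \<and> snd (H ((v,(\<alpha>1,0)),t)) \<in> long_ray_open
        \<and> \<not> lex_less (snd (H ((v,(\<alpha>1,0)),t))) (\<gamma>,0)"
      if v: "v \<in> topspace M" "G (v,t) = w" for v
    proof -
      have f1: "fst (H ((v,(\<alpha>1,0)),t)) = w" using fibG[OF v(1) t a1L lex_irrefl b1] v(2) by simp
      have s1: "\<not> lex_less (snd (H ((v,(\<alpha>1,0)),t))) (\<alpha>1,0)"
        using claimD[OF \<alpha>1(2) a1L t v(1) a1L] lex_irrefl by blast
      have vX: "(v,(\<alpha>1,0)) \<in> topspace X" using v(1) a1L tX by simp
      have "K t (H ((v,(\<alpha>1,0)),t)) = (v,(\<alpha>1,0))" using HK[OF t vX] .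
      then have "K t (w, snd (H ((v,(\<alpha>1,0)),t))) = (v,(\<alpha>1,0))"
        using f1 Hsplit[of v "(\<alpha>1,0)" t] by simp
      then show ?thesis using sndL[OF v(1) a1L t] ge_trans[OF s1 \<alpha>1(1)] LRO_def by simp
    qed
    have k1: "fst (K t (w, snd (H ((x,(\<alpha>1,0)),t)))) = x \<and> snd (H ((x,(\<alpha>1,0)),t)) \<in> long_ray_open
        \<and> \<not> lex_less (snd (H ((x,(\<alpha>1,0)),t))) (\<gamma>,0)" using key[OF x] w_def by simp
    have k2: "fst (K t (w, snd (H ((x',(\<alpha>1,0)),t)))) = x' \<and> snd (H ((x',(\<alpha>1,0)),t)) \<in> long_ray_open
        \<and> \<not> lex_less (snd (H ((x',(\<alpha>1,0)),t))) (\<gamma>,0)" using key[OF x'] w_def eq by simp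
    show ?thesis using k1 k2 \<gamma>(2) by metis
  qed
  from w_club[OF unc seg, of \<beta> F] obtain \<alpha>0 where \<alpha>0: "\<beta> < \<alpha>0" "\<forall>\<xi><\<alpha>0. F \<xi> < \<alpha>0" by blast
  have a0L: "(\<alpha>0,0) \<in> LRO" using LROgt[OF \<alpha>0(1)] .
  have preim: "\<exists>x' y'. x' \<in> topspace M \<and> y' \<in> LRO \<and> \<not> lex_less y' (\<alpha>0,0) \<and> K t (z,u) = (x',y') \<and>
       G (x',t) = z \<and> H ((x',y'),t) = (z,u)"
    if z: "z \<in> topspace M" and t: "t \<in> {0..1}" and u: "u \<in> LRO" and ua: "\<not> lex_less u (\<alpha>0,0)" for z t u
  proof -
    have zX: "(z,u) \<in> topspace X" using z u tX by simp
    obtain x' y' where xy: "K t (z,u) = (x',y')" by (cases "K t (z,u)") auto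
    have xyX: "x' \<in> topspace M" "y' \<in> LRO" using Kin[OF t zX] xy tX by auto
    have Hxy: "H ((x',y'),t) = (z,u)" using KH[OF t zX] xy by simp
    have ya: "\<not> lex_less y' (\<alpha>0,0)"
      using claimD[OF \<alpha>0(2) a0L t xyX] Hxy ua by simp
    moreover have "G (x',t) = z" using fibG[OF xyX(1) t xyX(2) ya \<alpha>0(1)] Hxy by simp
    ultimately show ?thesis using xyX xy Hxy by blast
  qed
  have Gc: "continuous_map (prod_topology M I) M G"
    using continuous_map_fst_of[OF cH1[OF \<beta>L, unfolded X_def]] unfolding G_def
    by (simp add: o_def case_prod_unfold)
  have isoG: "isotopy M G"
    unfolding isotopy_def
  proof (intro conjI ballI)
    show "continuous_map (prod_topology M (top_of_set {0..1})) M G" using Gc I_def by simp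
    fix t :: real assume t: "t \<in> {0..1}"
    define g' where "g' z = fst (K t (z,(\<alpha>0,0)))" for z
    have c1: "continuous_map M M (\<lambda>x. G (x,t))"
    proof -
      have "continuous_map M (prod_topology M I) (\<lambda>x. (x,t))" using t tI by (auto intro!: continuous_map_pairedI)
      then show ?thesis using continuous_map_compose[OF _ Gc] by (simp add: o_def)
    qed
    have c2: "continuous_map M M g'"
    proof -
      have "continuous_map M X (\<lambda>z. (z,(\<alpha>0,0)))" unfolding X_def using a0L tL by (auto intro!: continuous_map_pairedI)
      then have "continuous_map M X (K t \<circ> (\<lambda>z. (z,(\<alpha>0,0))))" using Kc[OF t] by (rule continuous_map_compose)
      then show ?thesis using continuous_map_fst_of[of M M L "K t \<circ> (\<lambda>z. (z,(\<alpha>0,0)))"]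
        unfolding g'_def X_def by (simp add: o_def)
    qed
    have "homeomorphic_maps M M (\<lambda>x. G (x,t)) g'"
      unfolding homeomorphic_maps_def
    proof (intro conjI ballI c1 c2)
      fix x assume x: "x \<in> topspace M"
      have GM: "G (x,t) \<in> topspace M" unfolding G_def using fstM[OF x \<beta>L t] by simp
      obtain x' y' where xy: "x' \<in> topspace M" "K t (G (x,t),(\<alpha>0,0)) = (x',y')" "G (x',t) = G (x,t)"
        using preim[OF GM t a0L lex_irrefl] by blast
      then show "g' (G (x,t)) = x" unfolding g'_def using inj[OF xy(1) x t xy(3)] by simp
    next
      fix z assume z: "z \<in> topspace M"
      obtain x' y' where xy: "K t (z,(\<alpha>0,0)) = (x',y')" "G (x',t) = z"
        using preim[OF z t a0L lex_irrefl] by blast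
      then show "G (g' z, t) = z" unfolding g'_def by simp
    qed
    then show "homeomorphic_map M M (\<lambda>x. G (x,t))" using homeomorphic_map_maps by blast
  qed
  have tail: "long_ray_tail \<alpha>0 = {y \<in> LRO. \<not> lex_less y (\<alpha>0,0)}"
    unfolding long_ray_tail_def LRO_def by simp
  have imgs: "(\<lambda>p. H (p, t)) ` ({x} \<times> long_ray_tail \<alpha>0) = {G (x, t)} \<times> long_ray_tail \<alpha>0"
    if x: "x \<in> topspace M" and t: "t \<in> {0..1}" for x t
  proof
    show "(\<lambda>p. H (p, t)) ` ({x} \<times> long_ray_tail \<alpha>0) \<subseteq> {G (x, t)} \<times> long_ray_tail \<alpha>0"
    proof
      fix w assume "w \<in> (\<lambda>p. H (p, t)) ` ({x} \<times> long_ray_tail \<alpha>0)"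
      then obtain y where y: "y \<in> long_ray_tail \<alpha>0" and w: "w = H ((x,y),t)" by auto
      from y have yL: "y \<in> LRO" and ya: "\<not> lex_less y (\<alpha>0,0)" using tail by auto
      have "fst (H ((x,y),t)) = G (x,t)" using fibG[OF x t yL ya \<alpha>0(1)] .
      moreover have "snd (H ((x,y),t)) \<in> long_ray_tail \<alpha>0"
        using claimD[OF \<alpha>0(2) a0L t x yL] ya sndL[OF x yL t] tail by simp
      ultimately show "w \<in> {G (x, t)} \<times> long_ray_tail \<alpha>0"
        using Hsplit[of x y t] w by (simp add: mem_Times_iff)
    qed
  next
    show "{G (x, t)} \<times> long_ray_tail \<alpha>0 \<subseteq> (\<lambda>p. H (p, t)) ` ({x} \<times> long_ray_tail \<alpha>0)"
    proof
      fix w assume "w \<in> {G (x, t)} \<times> long_ray_tail \<alpha>0"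
      then obtain u where u: "u \<in> long_ray_tail \<alpha>0" and w: "w = (G (x,t), u)" by auto
      from u have uL: "u \<in> LRO" and ua: "\<not> lex_less u (\<alpha>0,0)" using tail by auto
      have GM: "G (x,t) \<in> topspace M" unfolding G_def using fstM[OF x \<beta>L t] by simp
      obtain x' y' where xy: "x' \<in> topspace M" "y' \<in> LRO" "\<not> lex_less y' (\<alpha>0,0)"
         "G (x',t) = G (x,t)" "H ((x',y'),t) = (G (x,t),u)"
        using preim[OF GM t uL ua] by blast
      have "x' = x" using inj[OF xy(1) x t xy(4)] .
      then have "(x,y') \<in> {x} \<times> long_ray_tail \<alpha>0" using xy(2,3) tail by simp
      moreover have "w = H ((x,y'),t)" using xy(5) \<open>x' = x\<close> w by simp
      ultimately show "w \<in> (\<lambda>p. H (p, t)) ` ({x} \<times> long_ray_tail \<alpha>0)" by blast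
    qed
  qed
  show ?thesis using isoG imgs by blast
qed

end
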